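(* Consider a simple point process in a domain $D\subset\mathbb C$ with counting function $N$. Let $z_1,\ldots,z_n\in D$. Assume there exist disjoint neighborhoods $D_j$ of $z_j$, constants $\delta>0$, $c_2<\infty$, and an integral joint intensity $p$ of order $n+1$ satisfying, for every $j\in\{1,\ldots,n\}$, $$p(w_1,\ldots,w_n,w_* )<c_2|w_j-w_*|^{-2+\delta}\quad\text{for }(w_1,\ldots,w_n,w_* )\in D_1\times\cdots\times D_n\times D_j.$$ Let $N_{j,\epsilon}$ be the number of points in the disk of radius $\epsilon$ about $z_j$. Then as $\epsilon\to0$, $$\mathbf P(N_{1,\epsilon}=\cdots=N_{n,\epsilon}=1)\le\mathbf E(N_{1,\epsilon}\cdots N_{n,\epsilon})=\mathbf P(N_{1,\epsilon}=\cdots=N_{n,\epsilon}=1)+o(\epsilon^{2n}).$$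
   Context: A function $p$ on $D^k$ is an integral joint intensity (of order $k$) of a point process with counting function $N$ if for all disjoint Borel sets $\Lambda_1,\ldots,\Lambda_k\subset D$, $\mathbf E\prod_{i=1}^kN(\Lambda_i)=\int_{\Lambda_1\times\cdots\times\Lambda_k}p(z_1,\ldots,z_k)\,dz_1\cdots dz_k$ (Lebesgue measure). *)

theory Defs
  imports "HOL-Probability.Probability" "HOL-Library.Landau_Symbols"
begin

text \<open>A simple point process on a domain D in the complex plane is modelled as a random
  locally finite subset X of D (simplicity = no multiplicities). Counting function:\<close>

definition pp_count :: "complex set \<Rightarrow> complex set \<Rightarrow> ennreal" where
  "pp_count S \<Lambda> = (if finite (S \<inter> \<Lambda>) then of_nat (card (S \<inter> \<Lambda>)) else \<infinity>)"

definition simple_point_process ::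
  "'w measure \<Rightarrow> complex set \<Rightarrow> ('w \<Rightarrow> complex set) \<Rightarrow> bool" where
  "simple_point_process M D X \<longleftrightarrow>
     prob_space M \<and> open D \<and> connected D \<and>
     (\<forall>\<omega>\<in>space M. X \<omega> \<subseteq> D \<and> (\<forall>K. compact K \<and> K \<subseteq> D \<longrightarrow> finite (X \<omega> \<inter> K))) \<and>
     (\<forall>\<Lambda>\<in>sets borel. (\<lambda>\<omega>. pp_count (X \<omega>) \<Lambda>) \<in> borel_measurable M)"

definition integral_joint_intensity ::
  "'w measure \<Rightarrow> complex set \<Rightarrow> ('w \<Rightarrow> complex set) \<Rightarrow> nat \<Rightarrow> ((nat \<Rightarrow> complex) \<Rightarrow> real) \<Rightarrow> bool" where
  "integral_joint_intensity M D X k p \<longleftrightarrow>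
     p \<in> borel_measurable (PiM {..<k} (\<lambda>_. lborel)) \<and>
     (\<forall>\<Lambda> :: nat \<Rightarrow> complex set.
        (\<forall>i<k. \<Lambda> i \<in> sets borel \<and> \<Lambda> i \<subseteq> D) \<longrightarrow>
        (\<forall>i<k. \<forall>j<k. i \<noteq> j \<longrightarrow> \<Lambda> i \<inter> \<Lambda> j = {}) \<longrightarrow>
        (\<integral>\<^sup>+\<omega>. (\<Prod>i<k. pp_count (X \<omega>) (\<Lambda> i)) \<partial>M) =
        (\<integral>\<^sup>+w\<in>PiE {..<k} \<Lambda>. ennreal (p w) \<partial>PiM {..<k} (\<lambda>_. lborel)))"

end

theory Submission
  imports Defs
begin


lemma term_eq:
  fixes r d c :: real and k :: nat
  assumes r: "r > 0"
  shows "4 * (r / 2^k)\<^sup>2 * (c * (r / 2 ^ Suc k) powr (d - 2)) =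
         4 * 2 powr (2 - d) * c * r powr d * ((1/2) powr d) ^ k"
proof -
  define s where "s = r / 2^k"
  have s: "s > 0" using r by (simp add: s_def)
  have 1: "r / 2 ^ Suc k = s * (1/2)" by (simp add: s_def)
  have 2: "(s * (1/2)) powr (d - 2) = s powr (d - 2) * 2 powr (2 - d)"
    using s by (simp add: powr_mult powr_divide powr_minus_divide) (simp add: powr_diff)
  have 3: "s\<^sup>2 * s powr (d - 2) = s powr d"
    using s by (simp add: powr_add[symmetric] flip: powr_numeral)
  have 4: "s powr d = r powr d * ((1/2) powr d) ^ k"
    using r by (simp add: s_def powr_divide powr_realpow flip: powr_realpow) (simp add: powr_powr mult.commute)
  show ?thesis unfolding 1 2 s_def[symmetric]
    using 3 4 by (simp add: algebra_simps)
qed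
lemma emeasure_ball_le:
  fixes a :: complex assumes "s \<ge> 0"
  shows "emeasure lborel (ball a s) \<le> ennreal (4 * s\<^sup>2)"
proof -
  have "ball a s \<subseteq> cbox (a - Complex s s) (a + Complex s s)"
  proof
    fix y assume "y \<in> ball a s"
    then have "cmod (y - a) < s" by (simp add: dist_norm norm_minus_commute)
    moreover have "\<bar>Re (y - a)\<bar> \<le> cmod (y - a)" "\<bar>Im (y - a)\<bar> \<le> cmod (y - a)"
      by (rule abs_Re_le_cmod, rule abs_Im_le_cmod)
    ultimately show "y \<in> cbox (a - Complex s s) (a + Complex s s)"
      by (auto simp: mem_box Basis_complex_def)
  qed
  then have "emeasure lborel (ball a s) \<le> emeasure lborel (cbox (a - Complex s s) (a + Complex s s))"
    by (intro emeasure_mono) auto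
  also have "\<dots> = ennreal (4 * s\<^sup>2)"
    using assms by (simp add: emeasure_lborel_cbox_eq Basis_complex_def power2_eq_square)
  finally show ?thesis .
qed

lemma shell_int:
  fixes a :: complex and r d c :: real
  assumes r: "r > 0" and d: "0 < d" "d < 2" and c: "c \<ge> 0"
  shows "(\<integral>\<^sup>+ y. indicator (ball a r) y * (if y = a then \<infinity> else ennreal (c * cmod (a - y) powr (d - 2))) \<partial>lborel)
     \<le> ennreal (4 * 2 powr (2 - d) * c * r powr d / (1 - (1/2) powr d))"
proof -
  define s where "s k = r / 2^k" for k :: nat
  define tm where "tm k = ennreal (c * s (Suc k) powr (d - 2))" for k
  have spos: "s k > 0" for k using r by (simp add: s_def)
  have pw: "indicator (ball a r) y * (if y = a then \<infinity> else ennreal (c * cmod (a - y) powr (d - 2)))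
      \<le> (\<Sum>k. tm k * indicator (ball a (s k)) y)" if ya: "y \<noteq> a" for y
  proof (cases "y \<in> ball a r")
    case False then show ?thesis by simp
  next
    case True
    define t where "t = cmod (a - y)"
    have t: "0 < t" "t < r" using True ya by (auto simp: t_def dist_norm)
    obtain n where n: "r / t < 2 ^ n" using real_arch_pow[of 2 "r / t"] by auto
    have "s n < t" using n t spos[of n] by (simp add: s_def field_simps)
    moreover have "s (Suc n) \<le> s n" using r by (simp add: s_def field_simps)
    ultimately have ex: "\<exists>k. s (Suc k) \<le> t" by (intro exI[of _ n]) simp
    define k where "k = (LEAST k. s (Suc k) \<le> t)"
    have k1: "s (Suc k) \<le> t" unfolding k_def by (rule LeastI_ex[OF ex])
    have k2: "t < s k"
    proof (cases k)
      case 0 then show ?thesis using t by (simp add: s_def)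
    next
      case (Suc k')
      then have "\<not> s (Suc k') \<le> t" using not_less_Least[of k' "\<lambda>k. s (Suc k) \<le> t"] k_def by auto
      then show ?thesis using Suc by simp
    qed
    have "c * t powr (d - 2) \<le> c * s (Suc k) powr (d - 2)"
      using c d t k1 spos by (intro mult_left_mono powr_mono2') auto
    then have "indicator (ball a r) y * (if y = a then \<infinity> else ennreal (c * cmod (a - y) powr (d - 2)))
        \<le> tm k * indicator (ball a (s k)) y"
      using True ya k2 by (simp add: t_def[symmetric] tm_def dist_norm ennreal_leI)
    also have "\<dots> \<le> (\<Sum>k. tm k * indicator (ball a (s k)) y)" 
    proof -
      define g where "g = (\<lambda>k. tm k * indicator (ball a (s k)) y)"
      have "sum g {k} \<le> suminf g" by (rule sum_le_suminf[OF summableI]) auto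
      then have "g k \<le> suminf g" by simp
      then show ?thesis unfolding g_def .
    qed
    finally show ?thesis .
  qed
  have ae: "AE y in lborel. y \<noteq> a"
    using emeasure_lborel_countable[of "{a}"] by (intro AE_I[of _ _ "{a}"]) auto
  have "(\<integral>\<^sup>+ y. indicator (ball a r) y * (if y = a then \<infinity> else ennreal (c * cmod (a - y) powr (d - 2))) \<partial>lborel)
      \<le> (\<integral>\<^sup>+ y. (\<Sum>k. tm k * indicator (ball a (s k)) y) \<partial>lborel)"
    using ae by (intro nn_integral_mono_AE) (rule eventually_mono[OF ae], rule pw)
  also have "\<dots> = (\<Sum>k. \<integral>\<^sup>+ y. tm k * indicator (ball a (s k)) y \<partial>lborel)"
    by (intro nn_integral_suminf borel_measurable_times_ennreal borel_measurable_const borel_measurable_indicator) auto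
  also have "\<dots> = (\<Sum>k. tm k * emeasure lborel (ball a (s k)))"
    by (subst nn_integral_cmult_indicator) auto
  also have "\<dots> \<le> (\<Sum>k. tm k * ennreal (4 * (s k)\<^sup>2))"
    using spos by (intro suminf_le mult_left_mono emeasure_ball_le) (simp_all add: less_imp_le)
  also have "\<dots> = (\<Sum>k. ennreal (4 * 2 powr (2 - d) * c * r powr d * ((1/2) powr d) ^ k))"
  proof (rule suminf_cong)
    fix k
    have X: "c * s (Suc k) powr (d - 2) \<ge> 0" using c by simp
    have "tm k * ennreal (4 * (s k)\<^sup>2) = ennreal (4 * (s k)\<^sup>2 * (c * s (Suc k) powr (d - 2)))"
      unfolding tm_def using X by (subst ennreal_mult) (auto simp: mult.commute)
    then show "tm k * ennreal (4 * (s k)\<^sup>2) = ennreal (4 * 2 powr (2 - d) * c * r powr d * ((1/2) powr d) ^ k)"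
      using term_eq[OF r, of k c d] by (simp only: s_def)
  qed
  also have "\<dots> = ennreal (\<Sum>k. 4 * 2 powr (2 - d) * c * r powr d * ((1/2) powr d) ^ k)"
  proof -
    have q: "(1/2::real) powr d < 1" using d powr_less_mono'[of "1/2::real" 0 d] by simp
    have "summable (\<lambda>k. 4 * 2 powr (2 - d) * c * r powr d * ((1/2::real) powr d) ^ k)"
      using q by (intro summable_mult summable_geometric) auto
    then show ?thesis using c by (intro suminf_ennreal2) auto
  qed
  also have "(\<Sum>k. 4 * 2 powr (2 - d) * c * r powr d * ((1/2::real) powr d) ^ k) =
      4 * 2 powr (2 - d) * c * r powr d / (1 - (1/2) powr d)"
  proof -
    have q: "(1/2::real) powr d < 1" using d powr_less_mono'[of "1/2::real" 0 d] by simp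
    then show ?thesis by (subst suminf_mult) (auto simp: suminf_geometric summable_geometric)
  qed
  finally show ?thesis .
qed

lemma prod_bound:
  fixes n j :: nat and B :: "nat \<Rightarrow> complex set" and zj :: complex and \<epsilon> c d m :: real
    and f :: "(nat \<Rightarrow> complex) \<Rightarrow> ennreal"
  assumes jn: "j < n" and Bs: "\<And>i. i < n \<Longrightarrow> B i \<in> sets borel"
    and Bm: "\<And>i. i < n \<Longrightarrow> emeasure lborel (B i) \<le> ennreal m"
    and Bj: "B j \<subseteq> ball zj \<epsilon>" and eps: "\<epsilon> > 0" and d: "0 < d" "d < 2" and c: "c \<ge> 0"
    and fb: "\<And>w. w \<in> PiE {..<Suc n} (\<lambda>i. if i = n then B j else B i) \<Longrightarrow>
       f w \<le> (if w j = w n then \<infinity> else ennreal (c * cmod (w j - w n) powr (d - 2)))"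
  shows "(\<integral>\<^sup>+ w \<in> PiE {..<Suc n} (\<lambda>i. if i = n then B j else B i). f w \<partial>PiM {..<Suc n} (\<lambda>_. lborel))
     \<le> ennreal (4 * 2 powr (2 - d) * c * (2 * \<epsilon>) powr d / (1 - (1/2) powr d)) * ennreal m ^ n"
proof -
  interpret product_sigma_finite "\<lambda>_::nat. lborel :: complex measure" by standard
  define L where "L = (\<lambda>i. if i = n then B j else B i)"
  define K where "K = ennreal (4 * 2 powr (2 - d) * c * (2 * \<epsilon>) powr d / (1 - (1/2) powr d))"
  define hb where "hb = (\<lambda>a y::complex. if y = a then \<infinity> else ennreal (c * cmod (a - y) powr (d - 2)))"
  define H where "H = (\<lambda>w. hb (w j) (w n) * indicator (PiE {..<Suc n} L) w)"
  have Ls: "L i \<in> sets lborel" if "i < Suc n" for i using Bs jn that by (auto simp: L_def)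
  have "(\<integral>\<^sup>+ w \<in> PiE {..<Suc n} L. f w \<partial>PiM {..<Suc n} (\<lambda>_. lborel)) \<le> integral\<^sup>N (PiM {..<Suc n} (\<lambda>_. lborel)) H"
  proof (intro nn_integral_mono)
    fix w
    show "f w * indicator (PiE {..<Suc n} L) w \<le> H w"
    proof (cases "w \<in> PiE {..<Suc n} L")
      case True
      then have "f w \<le> hb (w j) (w n)" using fb[OF True[unfolded L_def]] by (simp add: hb_def eq_commute)
      then show ?thesis using True by (simp add: H_def)
    qed (simp add: H_def)
  qed
  also have "H \<in> borel_measurable (PiM (insert n {..<n}) (\<lambda>_. lborel))"
  proof -
    have [measurable]: "(\<lambda>x. x j) \<in> borel_measurable (PiM (insert n {..<n}) (\<lambda>_. lborel :: complex measure))"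
       "(\<lambda>x. x n) \<in> borel_measurable (PiM (insert n {..<n}) (\<lambda>_. lborel :: complex measure))"
      using jn measurable_component_singleton[of j "insert n {..<n}" "\<lambda>_. lborel :: complex measure"]
        measurable_component_singleton[of n "insert n {..<n}" "\<lambda>_. lborel :: complex measure"] by auto
    have [measurable]: "PiE {..<Suc n} L \<in> sets (PiM (insert n {..<n}) (\<lambda>_. lborel))"
      unfolding lessThan_Suc[symmetric] using Ls by (intro sets_PiM_I_finite) auto
    have [measurable]: "{x \<in> space (Pi\<^sub>M (insert n {..<n}) (\<lambda>_. lborel)). x n = x j}
     \<in> sets (Pi\<^sub>M (insert n {..<n}) (\<lambda>_. lborel :: complex measure))"
    proof -
      have "(\<lambda>x. x n - x j) \<in> borel_measurable (Pi\<^sub>M (insert n {..<n}) (\<lambda>_. lborel :: complex measure))"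
        by measurable
      then have "(\<lambda>x. x n - x j) -` {0} \<inter> space (Pi\<^sub>M (insert n {..<n}) (\<lambda>_. lborel :: complex measure)) \<in> sets (Pi\<^sub>M (insert n {..<n}) (\<lambda>_. lborel))"
        by (rule measurable_sets) auto
      moreover have "(\<lambda>x. x n - x j) -` {0} \<inter> space (Pi\<^sub>M (insert n {..<n}) (\<lambda>_. lborel :: complex measure)) = {x \<in> space (Pi\<^sub>M (insert n {..<n}) (\<lambda>_. lborel)). x n = x j}"
        by auto
      ultimately show ?thesis by simp
    qed
    show ?thesis unfolding H_def hb_def by measurable
  qed
  then have "integral\<^sup>N (PiM {..<Suc n} (\<lambda>_. lborel)) H =
      (\<integral>\<^sup>+ x. (\<integral>\<^sup>+ y. H (x(n := y)) \<partial>lborel) \<partial>PiM {..<n} (\<lambda>_. lborel))"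
    by (simp only: lessThan_Suc product_nn_integral_insert[of "{..<n}" n H, simplified])
  also have "\<dots> \<le> (\<integral>\<^sup>+ x. K * indicator (PiE {..<n} B) x \<partial>PiM {..<n} (\<lambda>_. lborel))"
  proof (intro nn_integral_mono)
    fix x assume x: "x \<in> space (PiM {..<n} (\<lambda>_. lborel :: complex measure))"
    then have xe: "x \<in> extensional {..<n}" by (simp add: space_PiM PiE_def)
    have mem: "x(n := y) \<in> PiE {..<Suc n} L \<longleftrightarrow> x \<in> PiE {..<n} B \<and> y \<in> B j" for y
      using xe by (auto simp: PiE_def Pi_def L_def extensional_def less_Suc_eq split: if_splits)
    show "(\<integral>\<^sup>+ y. H (x(n := y)) \<partial>lborel) \<le> K * indicator (PiE {..<n} B) x"
    proof (cases "x \<in> PiE {..<n} B")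
      case False
      then show ?thesis by (simp add: H_def mem indicator_def)
    next
      case True
      then have xj: "x j \<in> B j" using jn by auto
      have "(\<integral>\<^sup>+ y. H (x(n := y)) \<partial>lborel) \<le> (\<integral>\<^sup>+ y. indicator (ball (x j) (2 * \<epsilon>)) y * hb (x j) y \<partial>lborel)"
      proof (intro nn_integral_mono)
        fix y
        show "H (x(n := y)) \<le> indicator (ball (x j) (2 * \<epsilon>)) y * hb (x j) y"
        proof (cases "y \<in> B j")
          case False then show ?thesis by (simp add: H_def mem)
        next
          case True
          then have "dist zj y < \<epsilon>" "dist zj (x j) < \<epsilon>" using xj Bj by auto
          then have "dist (x j) y < 2 * \<epsilon>" using dist_triangle_less_add[of "x j" zj \<epsilon> y \<epsilon>]
            by (auto simp: dist_commute)
          then show ?thesis using True \<open>x \<in> PiE {..<n} B\<close> jn by (simp add: H_def mem)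
        qed
      qed
      also have "\<dots> \<le> K"
        unfolding K_def hb_def using shell_int[of "2 * \<epsilon>" d c "x j"] eps d c by simp
      finally show ?thesis using True by simp
    qed
  qed
  also have "\<dots> = K * emeasure (PiM {..<n} (\<lambda>_. lborel)) (PiE {..<n} B)"
    using Bs by (intro nn_integral_cmult_indicator) (auto intro!: sets_PiM_I_finite)
  also have "\<dots> = K * (\<Prod>i<n. emeasure lborel (B i))"
    using Bs by (subst emeasure_PiM) auto
  also have "\<dots> \<le> K * (\<Prod>i<n. ennreal m)"
  proof (intro mult_left_mono)
    show "(\<Prod>i<n. emeasure lborel (B i)) \<le> (\<Prod>i<n. ennreal m)"
      by (rule prod_mono_ennreal) (auto intro: Bm)
  qed simp
  finally show ?thesis unfolding L_def K_def by simp
qed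



definition grid :: "nat \<Rightarrow> complex \<Rightarrow> int \<times> int" where
  "grid k x = (\<lfloor>2^k * Re x\<rfloor>, \<lfloor>2^k * Im x\<rfloor>)"

lemma card_pairs_split:
  fixes g :: "'a \<Rightarrow> 'b"
  assumes S: "finite S" and A: "finite A" and gS: "g ` S \<subseteq> A"
  shows "card {xy \<in> S \<times> S. g (fst xy) \<noteq> g (snd xy)} =
    (\<Sum>ab\<in>{ab\<in>A \<times> A. fst ab \<noteq> snd ab}. card {x\<in>S. g x = fst ab} * card {x\<in>S. g x = snd ab})"
proof -
  have eq: "{xy \<in> S \<times> S. g (fst xy) \<noteq> g (snd xy)} =
      (\<Union>ab\<in>{ab\<in>A \<times> A. fst ab \<noteq> snd ab}. {x\<in>S. g x = fst ab} \<times> {x\<in>S. g x = snd ab})"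
    using gS by (auto simp: image_subset_iff)
  have "card (\<Union>ab\<in>{ab\<in>A \<times> A. fst ab \<noteq> snd ab}. {x\<in>S. g x = fst ab} \<times> {x\<in>S. g x = snd ab}) =
      (\<Sum>ab\<in>{ab\<in>A \<times> A. fst ab \<noteq> snd ab}. card ({x\<in>S. g x = fst ab} \<times> {x\<in>S. g x = snd ab}))"
    using S A by (intro card_UN_disjoint) auto
  then show ?thesis unfolding eq by (simp add: card_cartesian_product)
qed

lemma finite_grid_image:
  assumes "bounded B"
  shows "finite (grid k ` B)"
proof -
  obtain R where R: "\<And>x. x \<in> B \<Longrightarrow> norm x \<le> R" using assms bounded_iff by blast
  define L where "L = \<lceil>2^k * R\<rceil>"
  have "grid k ` B \<subseteq> {-L..L} \<times> {-L..L}"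
  proof
    fix y assume "y \<in> grid k ` B"
    then obtain x where x: "x \<in> B" "y = grid k x" by auto
    have "\<bar>Re x\<bar> \<le> R" "\<bar>Im x\<bar> \<le> R" using R[OF x(1)] abs_Re_le_cmod[of x] abs_Im_le_cmod[of x] by auto
    then have a: "\<bar>2^k * Re x\<bar> \<le> 2^k * R" "\<bar>2^k * Im x\<bar> \<le> 2^k * R"
      by (simp_all add: abs_mult mult_left_mono)
    have "\<lfloor>t\<rfloor> \<in> {-L..L}" if "\<bar>t\<bar> \<le> 2^k * R" for t :: real
    proof -
      have t1: "t \<le> 2^k * R" "- (2^k * R) \<le> t" using that by linarith+
      have "\<lfloor>t\<rfloor> \<le> \<lceil>t\<rceil>" by (rule floor_le_ceiling)
      also have "\<dots> \<le> L" unfolding L_def using t1 by (intro ceiling_mono)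
      finally have "\<lfloor>t\<rfloor> \<le> L" .
      moreover have "-L = \<lfloor>- (2^k * R)\<rfloor>" unfolding L_def by (simp add: ceiling_def)
      moreover have "\<lfloor>- (2^k * R)\<rfloor> \<le> \<lfloor>t\<rfloor>" using t1 by (intro floor_mono)
      ultimately show ?thesis by simp
    qed
    then show "y \<in> {-L..L} \<times> {-L..L}" using a x by (simp add: grid_def)
  qed
  moreover have "finite ({-L..L} \<times> {-L..L})" by (intro finite_cartesian_product finite_atLeastAtMost_int)
  ultimately show ?thesis by (rule finite_subset)
qed

lemma grid_sets: "{x. x \<in> B \<and> grid k x = a} \<in> sets borel" if "B \<in> sets borel"
proof -
  have "{x. grid k x = a} = {x. of_int (fst a) \<le> 2^k * Re x \<and> 2^k * Re x < of_int (fst a) + 1 \<and>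
       of_int (snd a) \<le> 2^k * Im x \<and> 2^k * Im x < of_int (snd a) + 1}"
  proof -
    have "grid k x = a \<longleftrightarrow> (of_int (fst a) \<le> 2^k * Re x \<and> 2^k * Re x < of_int (fst a) + 1 \<and>
       of_int (snd a) \<le> 2^k * Im x \<and> 2^k * Im x < of_int (snd a) + 1)" for x
      unfolding grid_def prod_eq_iff fst_conv snd_conv floor_eq_iff by blast
    then show ?thesis by blast
  qed
  also have "\<dots> \<in> sets borel" by measurable
  finally have "{x. grid k x = a} \<in> sets borel" .
  then have "B \<inter> {x. grid k x = a} \<in> sets borel" using that by auto
  then show ?thesis by (simp add: Collect_conj_eq)
qed


lemma floor_neq:
  fixes a b :: real
  assumes "1 < \<bar>a - b\<bar>" shows "\<lfloor>a\<rfloor> \<noteq> \<lfloor>b\<rfloor>"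
proof
  assume eq: "\<lfloor>a\<rfloor> = \<lfloor>b\<rfloor>"
  have A: "of_int \<lfloor>b\<rfloor> \<le> a" "a < of_int \<lfloor>b\<rfloor> + 1" using floor_correct[of a] eq by auto
  have B: "of_int \<lfloor>b\<rfloor> \<le> b" "b < of_int \<lfloor>b\<rfloor> + 1" using floor_correct[of b] by auto
  have "a - b < 1" "b - a < 1" using A B by linarith+
  then have "\<bar>a - b\<bar> < 1" by (simp add: abs_less_iff)
  with assms show False by simp
qed

lemma grid_separates:
  assumes "x \<noteq> y"
  shows "\<forall>\<^sub>F k in sequentially. grid k x \<noteq> grid k y"
proof -
  have "Re x \<noteq> Re y \<or> Im x \<noteq> Im y" using assms complex_eqI by blast
  then obtain f where f: "f = Re \<or> f = Im" "f x \<noteq> f y" by blast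
  define e where "e = \<bar>f x - f y\<bar>"
  have e: "e > 0" using f by (simp add: e_def)
  obtain N where N: "1 / e < 2 ^ N" using real_arch_pow[of 2 "1/e"] by auto
  show ?thesis
  proof (rule eventually_sequentiallyI[of N])
    fix k assume "N \<le> k"
    then have "(2::real)^N \<le> 2^k" by (simp add: power_increasing)
    with N have "1 / e < 2^k" by linarith
    with e have "1 < 2^k * e" by (simp add: divide_less_eq)
    then have h: "1 < \<bar>2^k * f x - 2^k * f y\<bar>" by (simp add: e_def abs_mult flip: right_diff_distrib)
    then have "\<lfloor>2^k * f x\<rfloor> \<noteq> \<lfloor>2^k * f y\<rfloor>" by (rule floor_neq)
    then show "grid k x \<noteq> grid k y" using f(1) by (auto simp: grid_def)
  qed
qed



definition Lam :: "nat \<Rightarrow> nat \<Rightarrow> nat \<Rightarrow> (nat \<Rightarrow> complex set) \<Rightarrow> (int \<times> int) \<times> (int \<times> int) \<Rightarrow> nat \<Rightarrow> complex set" where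
  "Lam n j k B ab i = (if i = j then {x. x \<in> B j \<and> grid k x = fst ab}
      else if i = n then {x. x \<in> B j \<and> grid k x = snd ab} else B i)"

definition pairs :: "nat \<Rightarrow> complex set \<Rightarrow> ((int \<times> int) \<times> (int \<times> int)) set" where
  "pairs k S = {ab \<in> grid k ` S \<times> grid k ` S. fst ab \<noteq> snd ab}"

definition Gsum :: "('w \<Rightarrow> complex set) \<Rightarrow> nat \<Rightarrow> nat \<Rightarrow> (nat \<Rightarrow> complex set) \<Rightarrow> nat \<Rightarrow> 'w \<Rightarrow> ennreal" where
  "Gsum X n j B k \<omega> = (\<Sum>ab\<in>pairs k (B j). \<Prod>i<Suc n. pp_count (X \<omega>) (Lam n j k B ab i))"

lemma pp_count_finite: "finite (S \<inter> A) \<Longrightarrow> pp_count S A = of_nat (card (S \<inter> A))"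
  by (simp add: pp_count_def)

lemma Gsum_eq:
  assumes jn: "j < n" and fin: "\<And>i. i < n \<Longrightarrow> finite (X \<omega> \<inter> B i)" and bd: "bounded (B j)"
  shows "Gsum X n j B k \<omega> = (\<Prod>i\<in>{..<n}-{j}. pp_count (X \<omega>) (B i)) *
     of_nat (card {xy \<in> (X \<omega> \<inter> B j) \<times> (X \<omega> \<inter> B j). grid k (fst xy) \<noteq> grid k (snd xy)})"
proof -
  define S where "S = X \<omega> \<inter> B j"
  have S: "finite S" using fin jn by (simp add: S_def)
  have cellS: "X \<omega> \<inter> {x. x \<in> B j \<and> grid k x = a} = {x\<in>S. grid k x = a}" for a
    by (auto simp: S_def)
  have finc: "finite (X \<omega> \<inter> {x. x \<in> B j \<and> grid k x = a})" for a
    unfolding cellS using S by simp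
  have spl: "{..<Suc n} = insert j (insert n ({..<n}-{j}))" using jn by auto
  have trm: "(\<Prod>i<Suc n. pp_count (X \<omega>) (Lam n j k B ab i)) =
     (\<Prod>i\<in>{..<n}-{j}. pp_count (X \<omega>) (B i)) *
     (of_nat (card {x\<in>S. grid k x = fst ab} * card {x\<in>S. grid k x = snd ab}))" for ab
  proof -
    have "(\<Prod>i<Suc n. pp_count (X \<omega>) (Lam n j k B ab i)) =
        pp_count (X \<omega>) (Lam n j k B ab j) * (pp_count (X \<omega>) (Lam n j k B ab n) *
        (\<Prod>i\<in>{..<n}-{j}. pp_count (X \<omega>) (Lam n j k B ab i)))"
      unfolding spl using jn by (simp add: prod.insert)
    also have "(\<Prod>i\<in>{..<n}-{j}. pp_count (X \<omega>) (Lam n j k B ab i)) = (\<Prod>i\<in>{..<n}-{j}. pp_count (X \<omega>) (B i))"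
      by (intro prod.cong) (auto simp: Lam_def)
    also have "pp_count (X \<omega>) (Lam n j k B ab j) = of_nat (card {x\<in>S. grid k x = fst ab})"
      using jn finc by (simp add: Lam_def pp_count_finite cellS)
    also have "pp_count (X \<omega>) (Lam n j k B ab n) = of_nat (card {x\<in>S. grid k x = snd ab})"
      using jn finc by (simp add: Lam_def pp_count_finite cellS)
    finally show ?thesis by (simp add: mult_ac)
  qed
  have "Gsum X n j B k \<omega> = (\<Prod>i\<in>{..<n}-{j}. pp_count (X \<omega>) (B i)) *
      of_nat (\<Sum>ab\<in>pairs k (B j). card {x\<in>S. grid k x = fst ab} * card {x\<in>S. grid k x = snd ab})"
    unfolding Gsum_def trm by (simp add: sum_distrib_left)
  also have "(\<Sum>ab\<in>pairs k (B j). card {x\<in>S. grid k x = fst ab} * card {x\<in>S. grid k x = snd ab}) =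
      card {xy \<in> S \<times> S. grid k (fst xy) \<noteq> grid k (snd xy)}"
    unfolding pairs_def
    by (rule card_pairs_split[symmetric]) (use S finite_grid_image[OF bd] in \<open>auto simp: S_def\<close>)
  finally show ?thesis by (simp add: S_def)
qed

lemma Gsum_eventually:
  assumes jn: "j < n" and fin: "\<And>i. i < n \<Longrightarrow> finite (X \<omega> \<inter> B i)" and bd: "bounded (B j)"
  shows "\<forall>\<^sub>F k in sequentially. Gsum X n j B k \<omega> = (\<Prod>i\<in>{..<n}-{j}. pp_count (X \<omega>) (B i)) *
     of_nat (card {xy \<in> (X \<omega> \<inter> B j) \<times> (X \<omega> \<inter> B j). fst xy \<noteq> snd xy})"
proof -
  define S where "S = X \<omega> \<inter> B j"
  have S: "finite S" using fin jn by (simp add: S_def)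
  have "finite {xy \<in> S \<times> S. fst xy \<noteq> snd xy}" using S by simp
  then have ev: "\<forall>\<^sub>F k in sequentially. \<forall>xy\<in>{xy \<in> S \<times> S. fst xy \<noteq> snd xy}. grid k (fst xy) \<noteq> grid k (snd xy)"
    by (rule eventually_ball_finite) (auto intro: grid_separates)
  show ?thesis
  proof (rule eventually_mono[OF ev])
    fix k assume h: "\<forall>xy\<in>{xy \<in> S \<times> S. fst xy \<noteq> snd xy}. grid k (fst xy) \<noteq> grid k (snd xy)"
    have "{xy \<in> S \<times> S. grid k (fst xy) \<noteq> grid k (snd xy)} = {xy \<in> S \<times> S. fst xy \<noteq> snd xy}"
      using h by auto
    then show "Gsum X n j B k \<omega> = (\<Prod>i\<in>{..<n}-{j}. pp_count (X \<omega>) (B i)) *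
       of_nat (card {xy \<in> (X \<omega> \<inter> B j) \<times> (X \<omega> \<inter> B j). fst xy \<noteq> snd xy})"
      using Gsum_eq[where X=X and \<omega>=\<omega> and B=B and k=k, OF jn fin bd] by (simp add: S_def)
  qed
qed



lemma Gsum_measurable:
  assumes meas: "\<forall>\<Lambda>\<in>sets borel. (\<lambda>\<omega>. pp_count (X \<omega>) \<Lambda>) \<in> borel_measurable M"
    and Bs: "\<And>i. i < n \<Longrightarrow> B i \<in> sets borel" and jn: "j < n"
  shows "Gsum X n j B k \<in> borel_measurable M"
proof -
  have "Lam n j k B ab i \<in> sets borel" if "i < Suc n" for ab i
    using that jn Bs grid_sets[OF Bs[OF jn]] by (auto simp: Lam_def less_Suc_eq)
  then show ?thesis unfolding Gsum_def
    by (intro borel_measurable_sum borel_measurable_prod_ennreal) (rule meas[rule_format], simp)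
qed

lemma Lam_subset: "Lam n j k B ab i \<subseteq> (if i = n then B j else B i)"
  by (auto simp: Lam_def)

lemma factorial_bound:
  fixes M :: "'w measure" and X :: "'w \<Rightarrow> complex set" and B :: "nat \<Rightarrow> complex set"
  assumes meas: "\<forall>\<Lambda>\<in>sets borel. (\<lambda>\<omega>. pp_count (X \<omega>) \<Lambda>) \<in> borel_measurable M"
    and intens: "integral_joint_intensity M D X (Suc n) p"
    and jn: "j < n"
    and Bs: "\<And>i. i < n \<Longrightarrow> B i \<in> sets borel \<and> B i \<subseteq> D"
    and Bdisj: "\<And>i i'. i < n \<Longrightarrow> i' < n \<Longrightarrow> i \<noteq> i' \<Longrightarrow> B i \<inter> B i' = {}"
    and Bbd: "bounded (B j)"
  shows "(\<integral>\<^sup>+\<omega>. liminf (\<lambda>k. Gsum X n j B k \<omega>) \<partial>M) \<le>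
    (\<integral>\<^sup>+ w \<in> PiE {..<Suc n} (\<lambda>i. if i = n then B j else B i). ennreal (p w) \<partial>PiM {..<Suc n} (\<lambda>_. lborel))"
proof -
  define L where "L = (\<lambda>i. if i = n then B j else B i)"
  define P where "P = PiM {..<Suc n} (\<lambda>_. lborel :: complex measure)"
  have pm: "p \<in> borel_measurable P" using intens by (simp add: integral_joint_intensity_def P_def)
  have Bs': "B i \<in> sets borel" if "i < n" for i using Bs that by auto
  have Lams: "Lam n j k B ab i \<in> sets borel" if "i < Suc n" for k ab i
    using that jn Bs' grid_sets[OF Bs'[OF jn]] by (auto simp: Lam_def less_Suc_eq)
  have Lam_D: "Lam n j k B ab i \<subseteq> D" if "i < Suc n" for k ab i
    using that jn Bs by (auto simp: Lam_def less_Suc_eq)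
  have Lam_disj: "Lam n j k B ab i \<inter> Lam n j k B ab i' = {}"
    if "i < Suc n" "i' < Suc n" "i \<noteq> i'" "ab \<in> pairs k (B j)" for k ab i i'
  proof -
    have "fst ab \<noteq> snd ab" using that(4) by (simp add: pairs_def)
    moreover have "B i \<inter> B j = {}" if "i < n" "i \<noteq> j" for i using Bdisj[of i j] that jn by auto
    moreover have "B j \<inter> B i = {}" if "i < n" "i \<noteq> j" for i using Bdisj[of j i] that jn by auto
    ultimately have h1: "fst ab \<noteq> snd ab" and h2: "\<And>u u'. u < n \<Longrightarrow> u' < n \<Longrightarrow> u \<noteq> u' \<Longrightarrow> B u \<inter> B u' = {}"
      using Bdisj by auto
    show ?thesis
    proof (cases "i = j \<and> i' = n \<or> i = n \<and> i' = j")
      case True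
      then show ?thesis using h1 jn by (auto simp: Lam_def)
    next
      case False
      define u where "u = (if i = n then j else i)"
      define u' where "u' = (if i' = n then j else i')"
      have "u < n" "u' < n" using that(1,2) jn by (auto simp: u_def u'_def less_Suc_eq)
      moreover have "u \<noteq> u'" using False that(3) by (auto simp: u_def u'_def)
      ultimately have "B u \<inter> B u' = {}" by (rule h2)
      moreover have "Lam n j k B ab i \<subseteq> B u" "Lam n j k B ab i' \<subseteq> B u'"
        using Lam_subset[of n j k B ab i] Lam_subset[of n j k B ab i'] by (auto simp: u_def u'_def split: if_splits)
      ultimately show ?thesis by blast
    qed
  qed
  have bnd: "integral\<^sup>N M (Gsum X n j B k) \<le> (\<integral>\<^sup>+ w \<in> PiE {..<Suc n} L. ennreal (p w) \<partial>P)" for k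
  proof -
    have fin: "finite (pairs k (B j))"
      using finite_grid_image[OF Bbd, of k] unfolding pairs_def by simp
    have "integral\<^sup>N M (Gsum X n j B k) =
        (\<Sum>ab\<in>pairs k (B j). \<integral>\<^sup>+\<omega>. (\<Prod>i<Suc n. pp_count (X \<omega>) (Lam n j k B ab i)) \<partial>M)"
      unfolding Gsum_def
      by (intro nn_integral_sum borel_measurable_prod_ennreal) (rule meas[rule_format], rule Lams, simp)
    also have "\<dots> = (\<Sum>ab\<in>pairs k (B j). \<integral>\<^sup>+ w. ennreal (p w) * indicator (PiE {..<Suc n} (Lam n j k B ab)) w \<partial>P)"
    proof (rule sum.cong[OF refl])
      fix ab assume ab: "ab \<in> pairs k (B j)"
      show "(\<integral>\<^sup>+\<omega>. (\<Prod>i<Suc n. pp_count (X \<omega>) (Lam n j k B ab i)) \<partial>M) =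
          (\<integral>\<^sup>+ w. ennreal (p w) * indicator (PiE {..<Suc n} (Lam n j k B ab)) w \<partial>P)"
      proof -
        have I: "\<forall>\<Lambda> :: nat \<Rightarrow> complex set.
          (\<forall>i<Suc n. \<Lambda> i \<in> sets borel \<and> \<Lambda> i \<subseteq> D) \<longrightarrow>
          (\<forall>i<Suc n. \<forall>j<Suc n. i \<noteq> j \<longrightarrow> \<Lambda> i \<inter> \<Lambda> j = {}) \<longrightarrow>
          (\<integral>\<^sup>+\<omega>. (\<Prod>i<Suc n. pp_count (X \<omega>) (\<Lambda> i)) \<partial>M) =
          (\<integral>\<^sup>+w\<in>PiE {..<Suc n} \<Lambda>. ennreal (p w) \<partial>P)"
          using intens unfolding integral_joint_intensity_def P_def by blast
        show ?thesis
          by (rule I[rule_format, of "Lam n j k B ab"]) (use Lams Lam_D Lam_disj[OF _ _ _ ab] in auto)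
      qed
    qed
    also have "\<dots> = (\<integral>\<^sup>+ w. (\<Sum>ab\<in>pairs k (B j). ennreal (p w) * indicator (PiE {..<Suc n} (Lam n j k B ab)) w) \<partial>P)"
    proof (rule nn_integral_sum[symmetric])
      fix ab
      have "PiE {..<Suc n} (Lam n j k B ab) \<in> sets P"
        unfolding P_def using Lams by (intro sets_PiM_I_finite) auto
      moreover have "(\<lambda>w. ennreal (p w)) \<in> borel_measurable P" using pm by simp
      ultimately show "(\<lambda>w. ennreal (p w) * indicator (PiE {..<Suc n} (Lam n j k B ab)) w) \<in> borel_measurable P"
        by (intro borel_measurable_times_ennreal borel_measurable_indicator)
    qed
    also have "\<dots> \<le> (\<integral>\<^sup>+ w. ennreal (p w) * indicator (PiE {..<Suc n} L) w \<partial>P)"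
    proof (intro nn_integral_mono)
      fix w
      define c where "c = (grid k (w j), grid k (w n))"
      have "(\<Sum>ab\<in>pairs k (B j). ennreal (p w) * indicator (PiE {..<Suc n} (Lam n j k B ab)) w) \<le>
          (\<Sum>ab\<in>pairs k (B j). if ab = c then ennreal (p w) * indicator (PiE {..<Suc n} L) w else 0)"
      proof (intro sum_mono)
        fix ab assume "ab \<in> pairs k (B j)"
        show "ennreal (p w) * indicator (PiE {..<Suc n} (Lam n j k B ab)) w \<le>
            (if ab = c then ennreal (p w) * indicator (PiE {..<Suc n} L) w else 0)"
        proof (cases "w \<in> PiE {..<Suc n} (Lam n j k B ab)")
          case True
          have wj: "w j \<in> Lam n j k B ab j" by (rule PiE_mem[OF True]) (use jn in simp)
          have wn: "w n \<in> Lam n j k B ab n" by (rule PiE_mem[OF True]) simp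
          have g1: "grid k (w j) = fst ab" using wj by (simp add: Lam_def)
          have g2: "grid k (w n) = snd ab" using wn jn by (simp add: Lam_def)
          have abc: "ab = c" using g1 g2 by (simp add: c_def prod_eq_iff)
          have wL: "w \<in> PiE {..<Suc n} L"
            using True PiE_mono[of "{..<Suc n}" "Lam n j k B ab" L] Lam_subset[of n j k B ab] unfolding L_def by blast
          have "ennreal (p w) * indicator (PiE {..<Suc n} (Lam n j k B ab)) w = ennreal (p w) * indicator (PiE {..<Suc n} L) w"
            using True wL by simp
          then show ?thesis using abc by simp
        qed simp
      qed
      also have "\<dots> \<le> ennreal (p w) * indicator (PiE {..<Suc n} L) w"
        using fin by (simp add: sum.delta)
      finally show "(\<Sum>ab\<in>pairs k (B j). ennreal (p w) * indicator (PiE {..<Suc n} (Lam n j k B ab)) w) \<le>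
          ennreal (p w) * indicator (PiE {..<Suc n} L) w" .
    qed
    finally show ?thesis .
  qed
  have "(\<integral>\<^sup>+\<omega>. liminf (\<lambda>k. Gsum X n j B k \<omega>) \<partial>M) \<le> liminf (\<lambda>k. integral\<^sup>N M (Gsum X n j B k))"
    using Gsum_measurable[OF meas _ jn] Bs' by (intro nn_integral_liminf) auto
  also have "\<dots> \<le> (\<integral>\<^sup>+ w \<in> PiE {..<Suc n} L. ennreal (p w) \<partial>P)"
    using bnd by (intro Liminf_le) auto
  finally show ?thesis unfolding L_def P_def .
qed



lemma nat_ineq:
  fixes m :: "nat \<Rightarrow> nat"
  shows "(\<Prod>i<n. m i) \<le> (if \<forall>i<n. m i = 1 then 1 else 0) + (\<Sum>j<n. (\<Prod>i\<in>{..<n}-{j}. m i) * (m j * m j - m j))"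
proof (cases "\<forall>i<n. m i = 1")
  case True
  then have "(\<Prod>i<n. m i) = 1" by simp
  then show ?thesis by (subst if_P[OF True]) (simp only: le_add1)
next
  case False
  show ?thesis
  proof (cases "\<exists>i<n. m i = 0")
    case True
    then have "(\<Prod>i<n. m i) = 0" by (intro prod_zero) auto
    then show ?thesis by (simp only: le0)
  next
    case F2: False
    from False obtain j where j0: "j < n" "m j \<noteq> 1" by blast
    with F2 have "m j \<noteq> 0" by auto
    with j0 have j: "j < n" "m j \<ge> 2" by auto
    have "(\<Prod>i<n. m i) = m j * (\<Prod>i\<in>{..<n}-{j}. m i)"
      using j by (simp add: prod.remove[of _ j])
    also have "\<dots> \<le> (m j * m j - m j) * (\<Prod>i\<in>{..<n}-{j}. m i)"
    proof (rule mult_right_mono)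
      have "m j * 2 \<le> m j * m j" using j(2) by (rule mult_le_mono2)
      then show "m j \<le> m j * m j - m j" by linarith
    qed simp
    also have "\<dots> = (\<Prod>i\<in>{..<n}-{j}. m i) * (m j * m j - m j)" by (simp add: mult.commute)
    also have "\<dots> \<le> (\<Sum>j<n. (\<Prod>i\<in>{..<n}-{j}. m i) * (m j * m j - m j))"
      by (rule member_le_sum) (use j in auto)
    finally show ?thesis by (rule trans_le_add2)
  qed
qed

lemma card_offdiag:
  assumes "finite S"
  shows "card {xy \<in> S \<times> S. fst xy \<noteq> snd xy} = card S * card S - card S"
proof -
  have eq: "{xy \<in> S \<times> S. fst xy \<noteq> snd xy} \<union> (\<lambda>x. (x, x)) ` S = S \<times> S" by auto
  have "card ({xy \<in> S \<times> S. fst xy \<noteq> snd xy} \<union> (\<lambda>x. (x, x)) ` S) = card {xy \<in> S \<times> S. fst xy \<noteq> snd xy} + card ((\<lambda>x. (x, x)) ` S)"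
    using assms by (intro card_Un_disjoint) auto
  then have "card (S \<times> S) = card {xy \<in> S \<times> S. fst xy \<noteq> snd xy} + card ((\<lambda>x. (x, x)) ` S)"
    by (simp only: eq)
  moreover have "card ((\<lambda>x. (x, x)) ` S) = card S" by (rule card_image) (auto simp: inj_on_def)
  ultimately show ?thesis by (simp add: card_cartesian_product)
qed

lemma pointwise_A:
  assumes fin: "\<And>i. i < n \<Longrightarrow> finite (X \<omega> \<inter> B i)" and bd: "\<And>j. j < n \<Longrightarrow> bounded (B j)"
  shows "(\<Prod>j<n. pp_count (X \<omega>) (B j)) \<le> (if \<forall>j<n. pp_count (X \<omega>) (B j) = 1 then 1 else 0)
      + (\<Sum>j<n. liminf (\<lambda>k. Gsum X n j B k \<omega>))"
proof -
  define m where "m i = card (X \<omega> \<inter> B i)" for i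
  have pc: "pp_count (X \<omega>) (B i) = of_nat (m i)" if "i < n" for i
    using fin[OF that] by (simp add: pp_count_finite m_def)
  have lim: "liminf (\<lambda>k. Gsum X n j B k \<omega>) = of_nat ((\<Prod>i\<in>{..<n}-{j}. m i) * (m j * m j - m j))"
    if j: "j < n" for j
  proof -
    have "liminf (\<lambda>k. Gsum X n j B k \<omega>) = (\<Prod>i\<in>{..<n}-{j}. pp_count (X \<omega>) (B i)) *
       of_nat (card {xy \<in> (X \<omega> \<inter> B j) \<times> (X \<omega> \<inter> B j). fst xy \<noteq> snd xy})"
      by (intro lim_imp_Liminf tendsto_eventually Gsum_eventually[where X=X and \<omega>=\<omega> and B=B, OF j fin bd[OF j]]) auto
    also have "\<dots> = of_nat ((\<Prod>i\<in>{..<n}-{j}. m i) * (m j * m j - m j))"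
      using j fin[OF j] by (simp add: pc card_offdiag m_def[symmetric] of_nat_prod)
    finally show ?thesis .
  qed
  have "(\<Prod>j<n. pp_count (X \<omega>) (B j)) = of_nat (\<Prod>j<n. m j)" by (simp add: pc of_nat_prod)
  also have "\<dots> \<le> (of_nat ((if \<forall>i<n. m i = 1 then 1 else 0) + (\<Sum>j<n. (\<Prod>i\<in>{..<n}-{j}. m i) * (m j * m j - m j))) :: ennreal)"
    by (rule of_nat_mono[OF nat_ineq])
  also have "\<dots> = (if \<forall>j<n. pp_count (X \<omega>) (B j) = 1 then 1 else 0) + (\<Sum>j<n. liminf (\<lambda>k. Gsum X n j B k \<omega>))"
    by (simp add: pc lim of_nat_sum)
  finally show ?thesis .
qed



theorem lemma31:
  fixes M :: "'w measure" and D :: "complex set" and X :: "'w \<Rightarrow> complex set"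
    and n :: nat and z :: "nat \<Rightarrow> complex" and Dn :: "nat \<Rightarrow> complex set"
    and \<delta> c2 :: real and p :: "(nat \<Rightarrow> complex) \<Rightarrow> real"
  assumes spp: "simple_point_process M D X"
    and zD: "\<forall>j<n. z j \<in> D"
    and nbhd: "\<forall>j<n. open (Dn j) \<and> z j \<in> Dn j \<and> Dn j \<subseteq> D"
    and disj: "\<forall>i<n. \<forall>j<n. i \<noteq> j \<longrightarrow> Dn i \<inter> Dn j = {}"
    and \<delta>: "\<delta> > 0"
    and intens: "integral_joint_intensity M D X (Suc n) p"
    and bound: "\<forall>j<n. \<forall>w. (\<forall>i<n. w i \<in> Dn i) \<longrightarrow> w n \<in> Dn j \<longrightarrow> w n \<noteq> w j \<longrightarrow>
                   p w < c2 * cmod (w j - w n) powr (-2 + \<delta>)"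
  shows "(\<forall>\<epsilon>>0. ennreal (measure M {\<omega>\<in>space M. \<forall>j<n. pp_count (X \<omega>) (ball (z j) \<epsilon>) = 1})
                 \<le> (\<integral>\<^sup>+\<omega>. (\<Prod>j<n. pp_count (X \<omega>) (ball (z j) \<epsilon>)) \<partial>M)) \<and>
         (\<exists>r :: real \<Rightarrow> real. r \<in> o[at_right 0](\<lambda>\<epsilon>. \<epsilon> ^ (2 * n)) \<and>
            (\<forall>\<^sub>F \<epsilon> in at_right 0.
               (\<integral>\<^sup>+\<omega>. (\<Prod>j<n. pp_count (X \<omega>) (ball (z j) \<epsilon>)) \<partial>M) =
               ennreal (measure M {\<omega>\<in>space M. \<forall>j<n. pp_count (X \<omega>) (ball (z j) \<epsilon>) = 1} + r \<epsilon>)))"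
proof -
  have ps: "prob_space M" and Xfin: "\<And>\<omega> K. \<omega> \<in> space M \<Longrightarrow> compact K \<Longrightarrow> K \<subseteq> D \<Longrightarrow> finite (X \<omega> \<inter> K)"
    and meas: "\<forall>\<Lambda>\<in>sets borel. (\<lambda>\<omega>. pp_count (X \<omega>) \<Lambda>) \<in> borel_measurable M"
    using spp unfolding simple_point_process_def by auto
  interpret prob_space M by (rule ps)
  define A where "A \<epsilon> = {\<omega>\<in>space M. \<forall>j<n. pp_count (X \<omega>) (ball (z j) \<epsilon>) = 1}" for \<epsilon>
  define E where "E \<epsilon> = (\<integral>\<^sup>+\<omega>. (\<Prod>j<n. pp_count (X \<omega>) (ball (z j) \<epsilon>)) \<partial>M)" for \<epsilon>
  have Asets: "A \<epsilon> \<in> sets M" for \<epsilon>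
  proof -
    have "{\<omega>\<in>space M. pp_count (X \<omega>) (ball (z j) \<epsilon>) = 1} \<in> sets M" for j
    proof -
      have "(\<lambda>\<omega>. pp_count (X \<omega>) (ball (z j) \<epsilon>)) -` {1} \<inter> space M \<in> sets M"
        by (rule measurable_sets[OF meas[rule_format]]) auto
      moreover have "(\<lambda>\<omega>. pp_count (X \<omega>) (ball (z j) \<epsilon>)) -` {1} \<inter> space M =
          {\<omega>\<in>space M. pp_count (X \<omega>) (ball (z j) \<epsilon>) = 1}" by auto
      ultimately show ?thesis by simp
    qed
    then have "{\<omega>\<in>space M. \<forall>j\<in>{..<n}. pp_count (X \<omega>) (ball (z j) \<epsilon>) = 1} \<in> sets M"
      by (intro sets.sets_Collect_finite_All) auto
    moreover have "{\<omega>\<in>space M. \<forall>j\<in>{..<n}. pp_count (X \<omega>) (ball (z j) \<epsilon>) = 1} = A \<epsilon>"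
      by (auto simp: A_def)
    ultimately show ?thesis by simp
  qed
  have part1: "ennreal (measure M (A \<epsilon>)) \<le> E \<epsilon>" for \<epsilon>
  proof -
    have "ennreal (measure M (A \<epsilon>)) = (\<integral>\<^sup>+\<omega>. indicator (A \<epsilon>) \<omega> \<partial>M)"
      using Asets by (simp add: emeasure_eq_measure)
    also have "\<dots> \<le> E \<epsilon>" unfolding E_def
    proof (intro nn_integral_mono)
      fix \<omega> assume "\<omega> \<in> space M"
      show "indicator (A \<epsilon>) \<omega> \<le> (\<Prod>j<n. pp_count (X \<omega>) (ball (z j) \<epsilon>))"
      proof (cases "\<omega> \<in> A \<epsilon>")
        case True
        then have "(\<Prod>j<n. pp_count (X \<omega>) (ball (z j) \<epsilon>)) = 1"
          by (intro prod.neutral) (auto simp: A_def)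
        then show ?thesis using True by simp
      qed simp
    qed
    finally show ?thesis .
  qed
  define d where "d = min \<delta> 1"
  define c where "c = max c2 0"
  have d: "0 < d" "d < 2" "d \<le> \<delta>" "d \<le> 1" using \<delta> by (auto simp: d_def)
  have c: "c \<ge> 0" "c2 \<le> c" by (auto simp: c_def)
  have "\<forall>i<n. \<exists>e>0. cball (z i) e \<subseteq> Dn i" using nbhd by (meson open_contains_cball)
  then obtain f where f: "\<And>i. i < n \<Longrightarrow> f i > 0 \<and> cball (z i) (f i) \<subseteq> Dn i" by metis
  define e0 where "e0 = Min (insert (1/2) (f ` {..<n}))"
  have e0a: "e0 > 0" using f by (auto simp: e0_def Min_gr_iff)
  have e0b: "e0 \<le> 1/2" unfolding e0_def by (rule Min_le) auto
  note e0 = e0a e0b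
  have e0D: "cball (z i) e0 \<subseteq> Dn i" if "i < n" for i
  proof -
    have "e0 \<le> f i" using that by (auto simp: e0_def intro: Min_le)
    then show ?thesis using f[OF that] by (meson subset_cball order_trans)
  qed
  define K0 where "K0 = 4 * 2 powr (2 - d) * c / (1 - (1/2) powr d)"
  define Bd where "Bd \<epsilon> = K0 * (2 * \<epsilon>) powr d * (4 * \<epsilon>\<^sup>2) ^ n" for \<epsilon> :: real
  have key: "E \<epsilon> \<le> ennreal (measure M (A \<epsilon>)) + ennreal (real n * Bd \<epsilon>)" if eps: "0 < \<epsilon>" "\<epsilon> \<le> e0" for \<epsilon>
  proof -
    define B where "B i = ball (z i) \<epsilon>" for i
    have BD: "cball (z i) \<epsilon> \<subseteq> Dn i" if "i < n" for i
      using e0D[OF that] eps by (meson subset_cball order_trans)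
    have BDn: "B i \<subseteq> Dn i" if "i < n" for i using BD[OF that] by (auto simp: B_def)
    have fin: "finite (X \<omega> \<inter> B i)" if "\<omega> \<in> space M" "i < n" for \<omega> i
    proof -
      have "finite (X \<omega> \<inter> cball (z i) \<epsilon>)"
        using Xfin[OF that(1)] BD[OF that(2)] nbhd that(2) by auto
      then show ?thesis by (rule finite_subset[rotated]) (auto simp: B_def)
    qed
    have bd: "bounded (B j)" for j by (simp add: B_def)
    have Bs: "B i \<in> sets borel \<and> B i \<subseteq> D" if "i < n" for i using BDn[OF that] nbhd that by (auto simp: B_def)
    have Bdisj: "B i \<inter> B i' = {}" if "i < n" "i' < n" "i \<noteq> i'" for i i'
      using BDn[OF that(1)] BDn[OF that(2)] disj that by blast
    have Gm: "(\<lambda>\<omega>. liminf (\<lambda>k. Gsum X n j B k \<omega>)) \<in> borel_measurable M" if "j < n" for j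
      using Gsum_measurable[OF meas _ that, of B] Bs by (intro borel_measurable_liminf) auto
    have "E \<epsilon> \<le> (\<integral>\<^sup>+\<omega>. indicator (A \<epsilon>) \<omega> + (\<Sum>j<n. liminf (\<lambda>k. Gsum X n j B k \<omega>)) \<partial>M)"
      unfolding E_def
    proof (intro nn_integral_mono)
      fix \<omega> assume \<omega>: "\<omega> \<in> space M"
      have "indicator (A \<epsilon>) \<omega> = (if \<forall>j<n. pp_count (X \<omega>) (B j) = 1 then 1 else (0::ennreal))"
        using \<omega> by (simp add: A_def B_def indicator_def)
      then show "(\<Prod>j<n. pp_count (X \<omega>) (ball (z j) \<epsilon>)) \<le> indicator (A \<epsilon>) \<omega> + (\<Sum>j<n. liminf (\<lambda>k. Gsum X n j B k \<omega>))"
        using pointwise_A[where X=X and \<omega>=\<omega> and B=B and n=n, OF fin[OF \<omega>] bd] by (simp add: B_def)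
    qed
    also have "\<dots> = emeasure M (A \<epsilon>) + (\<Sum>j<n. \<integral>\<^sup>+\<omega>. liminf (\<lambda>k. Gsum X n j B k \<omega>) \<partial>M)"
    proof -
      have sm: "(\<lambda>\<omega>. \<Sum>j<n. liminf (\<lambda>k. Gsum X n j B k \<omega>)) \<in> borel_measurable M"
        using Gm by (intro borel_measurable_sum) auto
      have "(\<integral>\<^sup>+\<omega>. indicator (A \<epsilon>) \<omega> + (\<Sum>j<n. liminf (\<lambda>k. Gsum X n j B k \<omega>)) \<partial>M) =
          (\<integral>\<^sup>+\<omega>. indicator (A \<epsilon>) \<omega> \<partial>M) + (\<integral>\<^sup>+\<omega>. (\<Sum>j<n. liminf (\<lambda>k. Gsum X n j B k \<omega>)) \<partial>M)"
        using Asets sm by (intro nn_integral_add) auto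
      also have "(\<integral>\<^sup>+\<omega>. (\<Sum>j<n. liminf (\<lambda>k. Gsum X n j B k \<omega>)) \<partial>M) = (\<Sum>j<n. \<integral>\<^sup>+\<omega>. liminf (\<lambda>k. Gsum X n j B k \<omega>) \<partial>M)"
        using Gm by (intro nn_integral_sum) auto
      finally show ?thesis using Asets by simp
    qed
    also have "\<dots> \<le> emeasure M (A \<epsilon>) + (\<Sum>j<n. ennreal (Bd \<epsilon>))"
    proof (intro add_left_mono sum_mono)
      fix j assume j: "j \<in> {..<n}"
      have "(\<integral>\<^sup>+\<omega>. liminf (\<lambda>k. Gsum X n j B k \<omega>) \<partial>M) \<le>
          (\<integral>\<^sup>+ w \<in> PiE {..<Suc n} (\<lambda>i. if i = n then B j else B i). ennreal (p w) \<partial>PiM {..<Suc n} (\<lambda>_. lborel))"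
        using j Bs Bdisj by (intro factorial_bound[OF meas intens] bd) auto
      also have "\<dots> \<le> ennreal (4 * 2 powr (2 - d) * c * (2 * \<epsilon>) powr d / (1 - (1/2) powr d)) * ennreal (4 * \<epsilon>\<^sup>2) ^ n"
      proof (rule prod_bound[where zj = "z j"])
        show "j < n" using j by simp
        show "B i \<in> sets borel" if "i < n" for i using Bs[OF that] by simp
        show "emeasure lborel (B i) \<le> ennreal (4 * \<epsilon>\<^sup>2)" for i
          unfolding B_def using eps by (intro emeasure_ball_le) simp
        show "B j \<subseteq> ball (z j) \<epsilon>" by (simp add: B_def)
        show "0 < \<epsilon>" "0 < d" "d < 2" "0 \<le> c" using eps d c by auto
        fix w assume w: "w \<in> PiE {..<Suc n} (\<lambda>i. if i = n then B j else B i)"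
        show "ennreal (p w) \<le> (if w j = w n then \<infinity> else ennreal (c * cmod (w j - w n) powr (d - 2)))"
        proof (cases "w j = w n")
          case False
          have wi: "w i \<in> B i" if "i < n" for i using PiE_mem[OF w, of i] that by simp
          have wn: "w n \<in> B j" using PiE_mem[OF w, of n] by simp
          have wj: "w j \<in> B j" using wi j by simp
          define t where "t = cmod (w j - w n)"
          have t: "0 < t" "t < 1"
          proof -
            show "0 < t" using False by (simp add: t_def)
            have "dist (w j) (z j) < \<epsilon>" "dist (w n) (z j) < \<epsilon>" using wj wn by (auto simp: B_def dist_commute)
            then have "dist (w j) (w n) < 2 * \<epsilon>" using dist_triangle_less_add[of "w j" "z j" \<epsilon> "w n" \<epsilon>]
              by (auto simp: dist_commute)
            then show "t < 1" using eps e0 by (simp add: t_def dist_norm)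
          qed
          have "p w < c2 * t powr (-2 + \<delta>)"
            using bound[rule_format, of j w] j wi wn BDn False by (auto simp: t_def)
          also have "\<dots> \<le> c * t powr (d - 2)"
          proof (rule mult_mono)
            show "t powr (-2 + \<delta>) \<le> t powr (d - 2)" using t d by (intro powr_mono') auto
          qed (use c t in auto)
          finally have "p w \<le> c * t powr (d - 2)" by simp
          then show ?thesis using False by (simp add: t_def ennreal_leI)
        qed simp
      qed
      also have "\<dots> = ennreal (Bd \<epsilon>)"
      proof -
        have q: "(1/2::real) powr d < 1" using d powr_less_mono'[of "1/2::real" 0 d] by simp
        have X0: "0 \<le> 4 * 2 powr (2 - d) * c * (2 * \<epsilon>) powr d / (1 - (1/2) powr d)" using q c by simp
        have "ennreal (4 * 2 powr (2 - d) * c * (2 * \<epsilon>) powr d / (1 - (1/2) powr d)) * ennreal (4 * \<epsilon>\<^sup>2) ^ n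
            = ennreal (4 * 2 powr (2 - d) * c * (2 * \<epsilon>) powr d / (1 - (1/2) powr d) * (4 * \<epsilon>\<^sup>2) ^ n)"
        proof -
          have gen: "\<And>X Y. 0 \<le> X \<Longrightarrow> 0 \<le> Y \<Longrightarrow> ennreal X * ennreal Y ^ n = ennreal (X * Y ^ n)"
            by (simp add: ennreal_mult ennreal_power)
          show ?thesis by (rule gen[OF X0]) simp
        qed
        also have "4 * 2 powr (2 - d) * c * (2 * \<epsilon>) powr d / (1 - (1/2) powr d) * (4 * \<epsilon>\<^sup>2) ^ n = Bd \<epsilon>"
          using q by (simp add: Bd_def K0_def field_simps)
        finally show ?thesis .
      qed
      finally show "(\<integral>\<^sup>+\<omega>. liminf (\<lambda>k. Gsum X n j B k \<omega>) \<partial>M) \<le> ennreal (Bd \<epsilon>)" .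
    qed
    also have "\<dots> = ennreal (measure M (A \<epsilon>)) + ennreal (real n * Bd \<epsilon>)"
      by (simp add: emeasure_eq_measure ennreal_of_nat_eq_real_of_nat ennreal_mult')
    finally show ?thesis .
  qed
  have q: "(1/2::real) powr d < 1" using d powr_less_mono'[of "1/2::real" 0 d] by simp
  have K0: "K0 \<ge> 0" using q c by (simp add: K0_def)
  define C0 where "C0 = real n * K0 * 2 powr d * 4 ^ n"
  have Bd_eq: "real n * Bd \<epsilon> = C0 * \<epsilon> powr d * \<epsilon> ^ (2 * n)" if "\<epsilon> > 0" for \<epsilon>
    using that by (simp add: Bd_def C0_def powr_mult power_mult_distrib power_mult mult_ac flip: power_mult)
  have Bd0: "Bd \<epsilon> \<ge> 0" if "\<epsilon> > 0" for \<epsilon> using K0 that by (simp add: Bd_def)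
  define r where "r \<epsilon> = enn2real (E \<epsilon>) - measure M (A \<epsilon>)" for \<epsilon>
  have req: "E \<epsilon> = ennreal (measure M (A \<epsilon>) + r \<epsilon>) \<and> 0 \<le> r \<epsilon> \<and> r \<epsilon> \<le> real n * Bd \<epsilon>"
    if eps: "0 < \<epsilon>" "\<epsilon> \<le> e0" for \<epsilon>
  proof -
    have nB: "0 \<le> real n * Bd \<epsilon>" using Bd0[OF eps(1)] by simp
    have k: "E \<epsilon> \<le> ennreal (measure M (A \<epsilon>) + real n * Bd \<epsilon>)"
      using key[OF eps] nB by (simp add: ennreal_plus)
    then have Efin: "E \<epsilon> < top" using ennreal_less_top le_less_trans by blast
    then have Ee: "E \<epsilon> = ennreal (enn2real (E \<epsilon>))" by simp
    have "ennreal (measure M (A \<epsilon>)) \<le> ennreal (enn2real (E \<epsilon>))" using part1[of \<epsilon>] Ee by simp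
    then have r0: "measure M (A \<epsilon>) \<le> enn2real (E \<epsilon>)" by (simp add: ennreal_le_iff)
    have "ennreal (enn2real (E \<epsilon>)) \<le> ennreal (measure M (A \<epsilon>) + real n * Bd \<epsilon>)" using k Ee by simp
    then have r1: "enn2real (E \<epsilon>) \<le> measure M (A \<epsilon>) + real n * Bd \<epsilon>"
      using nB by (subst (asm) ennreal_le_iff) auto
    show ?thesis using r0 r1 Ee by (simp add: r_def)
  qed
  have ev0: "\<forall>\<^sub>F \<epsilon> in at_right 0. 0 < \<epsilon> \<and> \<epsilon> \<le> e0"
    using e0 by (auto simp: eventually_at_right_field intro!: exI[of _ e0])
  have ro: "r \<in> o[at_right 0](\<lambda>\<epsilon>. \<epsilon> ^ (2 * n))"
  proof (rule landau_o.smallI)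
    fix c' :: real assume c': "c' > 0"
    have "((\<lambda>\<epsilon>. \<epsilon> powr d) \<longlongrightarrow> 0) (at_right (0::real))"
      using d by (intro tendsto_zero_powrI tendsto_ident_at tendsto_const) (auto simp: eventually_at_right_field intro!: exI[of _ 1])
    then have "((\<lambda>\<epsilon>. C0 * \<epsilon> powr d) \<longlongrightarrow> 0) (at_right (0::real))"
      by (intro tendsto_mult_right_zero)
    then have ev1: "\<forall>\<^sub>F \<epsilon> in at_right 0. C0 * \<epsilon> powr d < c'" using c' by (rule order_tendstoD(2))
    show "\<forall>\<^sub>F \<epsilon> in at_right 0. norm (r \<epsilon>) \<le> c' * norm (\<epsilon> ^ (2 * n))"
      using ev0 ev1
    proof eventually_elim
      case (elim \<epsilon>)
      then have h: "0 \<le> r \<epsilon>" "r \<epsilon> \<le> real n * Bd \<epsilon>" using req by auto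
      have "r \<epsilon> \<le> C0 * \<epsilon> powr d * \<epsilon> ^ (2 * n)" using h Bd_eq elim by simp
      also have "\<dots> \<le> c' * \<epsilon> ^ (2 * n)" using elim by (intro mult_right_mono) auto
      finally show ?case using h elim by simp
    qed
  qed
  show ?thesis
  proof (intro conjI allI impI exI[of _ r])
    fix \<epsilon> :: real assume "\<epsilon> > 0"
    show "ennreal (measure M {\<omega>\<in>space M. \<forall>j<n. pp_count (X \<omega>) (ball (z j) \<epsilon>) = 1})
         \<le> (\<integral>\<^sup>+\<omega>. (\<Prod>j<n. pp_count (X \<omega>) (ball (z j) \<epsilon>)) \<partial>M)"
      using part1[of \<epsilon>] by (simp add: A_def E_def)
  next
    show "r \<in> o[at_right 0](\<lambda>\<epsilon>. \<epsilon> ^ (2 * n))" by (rule ro)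
  next
    show "\<forall>\<^sub>F \<epsilon> in at_right 0. (\<integral>\<^sup>+\<omega>. (\<Prod>j<n. pp_count (X \<omega>) (ball (z j) \<epsilon>)) \<partial>M) =
               ennreal (measure M {\<omega>\<in>space M. \<forall>j<n. pp_count (X \<omega>) (ball (z j) \<epsilon>) = 1} + r \<epsilon>)"
      using ev0 by eventually_elim (use req in \<open>auto simp: A_def E_def\<close>)
  qed
qed

end
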